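(* In the free group $\mathbb{F}_2$ on $a,b$, set $a_0:=b^{-1}$, $b_0:=aba^{-1}$ and recursively $a_n:=a_{n-1}b_{n-1}$, $b_n:=a_{n-1}^{-1}b_{n-1}^{-1}$ for $n\ge1$. For $w\in\mathbb{F}_2$ let $\gamma(w):=\max\{m\mid w\in\gamma_m(\mathbb{F}_2)\}$. Then $\gamma(a_{n+2})\ge\gamma(a_{n+1})+\gamma(a_n)$ for all $n\in\mathbb{N}$. In particular, there exists a constant $C>0$ such that $\gamma(a_n)\ge C\cdot\varphi^n$ for all $n$, where $\varphi=\frac{1+\sqrt5}{2}$ is the golden ratio.
   Context: $\gamma_m(\mathbb{F}_2)$ denotes the $m$-th term of the lower central series: $\gamma_1(\mathbb{F}_2)=\mathbb{F}_2$, $\gamma_{m+1}(\mathbb{F}_2)=[\gamma_m(\mathbb{F}_2),\mathbb{F}_2]$. *)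

theory Defs
  imports "HOL-Algebra.Algebra" "HOL-Library.Extended_Real"
begin

text \<open>Free group on two generators: reduced words over letters (inverted?, generator),
  generator False = a, generator True = b.\<close>

type_synonym letter = "bool \<times> bool"

fun cancels :: "letter \<Rightarrow> letter \<Rightarrow> bool" where
  "cancels (i, x) (j, y) = (x = y \<and> i \<noteq> j)"

definition reduced :: "letter list \<Rightarrow> bool" where
  "reduced xs = (\<forall>i. Suc i < length xs \<longrightarrow> \<not> cancels (xs ! i) (xs ! Suc i))"

fun red_cons :: "letter \<Rightarrow> letter list \<Rightarrow> letter list" where
  "red_cons l [] = [l]"
| "red_cons l (m # ms) = (if cancels l m then ms else l # m # ms)"

definition normalize :: "letter list \<Rightarrow> letter list" where
  "normalize xs = foldr red_cons xs []"

definition F2 :: "letter list monoid" where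
  "F2 = \<lparr>carrier = {xs. reduced xs}, monoid.mult = (\<lambda>x y. normalize (x @ y)), one = []\<rparr>"

definition gen_a :: "letter list" where "gen_a = [(False, False)]"
definition gen_b :: "letter list" where "gen_b = [(False, True)]"

text \<open>Lower central series, indexed from 1: lcs G 1 = carrier G,
  lcs G (m+1) = [lcs G m, G] (subgroup generated by commutators).\<close>

fun lcs :: "('a, 'b) monoid_scheme \<Rightarrow> nat \<Rightarrow> 'a set" where
  "lcs G 0 = carrier G"
| "lcs G (Suc 0) = carrier G"
| "lcs G (Suc (Suc m)) = generate G
     {x \<otimes>\<^bsub>G\<^esub> y \<otimes>\<^bsub>G\<^esub> inv\<^bsub>G\<^esub> x \<otimes>\<^bsub>G\<^esub> inv\<^bsub>G\<^esub> y | x y. x \<in> lcs G (Suc m) \<and> y \<in> carrier G}"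

text \<open>gamma w = max {m >= 1 | w in gamma_m(F2)}, valued in enat (infinite for the identity).\<close>

definition gamma_deg :: "letter list \<Rightarrow> enat" where
  "gamma_deg w = Sup {enat m | m. 1 \<le> m \<and> w \<in> lcs F2 m}"

fun ab_seq :: "nat \<Rightarrow> letter list \<times> letter list" where
  "ab_seq 0 = (inv\<^bsub>F2\<^esub> gen_b, gen_a \<otimes>\<^bsub>F2\<^esub> gen_b \<otimes>\<^bsub>F2\<^esub> inv\<^bsub>F2\<^esub> gen_a)"
| "ab_seq (Suc n) = (let (x, y) = ab_seq n in
      (x \<otimes>\<^bsub>F2\<^esub> y, inv\<^bsub>F2\<^esub> x \<otimes>\<^bsub>F2\<^esub> inv\<^bsub>F2\<^esub> y))"

definition seq_a :: "nat \<Rightarrow> letter list" where "seq_a n = fst (ab_seq n)"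
definition seq_b :: "nat \<Rightarrow> letter list" where "seq_b n = snd (ab_seq n)"

end

theory Submission
  imports Defs
begin


lemma reduced_Nil[simp]: "reduced []" by (simp add: reduced_def)
lemma reduced_Cons: "reduced (x # xs) \<longleftrightarrow> reduced xs \<and> (case xs of [] \<Rightarrow> True | y # _ \<Rightarrow> \<not> cancels x y)"
proof
  assume r: "reduced (x # xs)"
  have "reduced xs" unfolding reduced_def
  proof (intro allI impI)
    fix i assume "Suc i < length xs"
    thus "\<not> cancels (xs ! i) (xs ! Suc i)" using r[unfolded reduced_def, rule_format, of "Suc i"] by simp
  qed
  moreover have "(case xs of [] \<Rightarrow> True | y # _ \<Rightarrow> \<not> cancels x y)"
    using r[unfolded reduced_def, rule_format, of 0] by (cases xs) auto
  ultimately show "reduced xs \<and> (case xs of [] \<Rightarrow> True | y # _ \<Rightarrow> \<not> cancels x y)" by simp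
next
  assume h: "reduced xs \<and> (case xs of [] \<Rightarrow> True | y # _ \<Rightarrow> \<not> cancels x y)"
  show "reduced (x # xs)" unfolding reduced_def
  proof (intro allI impI)
    fix i assume i: "Suc i < length (x # xs)"
    show "\<not> cancels ((x # xs) ! i) ((x # xs) ! Suc i)"
    proof (cases i)
      case 0 thus ?thesis using h i by (cases xs) auto
    next
      case (Suc k) thus ?thesis using h i unfolding reduced_def by auto
    qed
  qed
qed

lemma reduced_red_cons: "reduced zs \<Longrightarrow> reduced (red_cons l zs)"
  by (cases zs) (auto simp: reduced_Cons split: list.splits)

lemma reduced_foldr: "reduced zs \<Longrightarrow> reduced (foldr red_cons xs zs)"
  by (induction xs) (auto intro: reduced_red_cons)

lemma reduced_normalize: "reduced (normalize xs)"
  unfolding normalize_def by (rule reduced_foldr) simp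

lemma normalize_reduced: "reduced xs \<Longrightarrow> normalize xs = xs"
proof (induction xs)
  case Nil thus ?case by (simp add: normalize_def)
next
  case (Cons x xs)
  hence "normalize xs = xs" by (simp add: reduced_Cons)
  thus ?case using Cons.prems by (cases xs) (auto simp: normalize_def reduced_Cons)
qed

fun flip :: "letter \<Rightarrow> letter" where "flip (i, x) = (\<not> i, x)"

lemma cancels_flip: "cancels l m \<longleftrightarrow> m = flip l"
  by (cases l; cases m) auto

lemma red_cons_flip: "reduced zs \<Longrightarrow> red_cons (flip l) (red_cons l zs) = zs"
proof (cases zs)
  case Nil thus ?thesis by (cases l) auto
next
  case (Cons m ms)
  assume r: "reduced zs"
  show ?thesis
  proof (cases "cancels l m")
    case True
    hence m: "m = flip l" by (simp add: cancels_flip)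
    show ?thesis
    proof (cases ms)
      case Nil thus ?thesis using Cons True m by simp
    next
      case (Cons m' ms')
      have "\<not> cancels m m'" using r \<open>zs = m # ms\<close> Cons by (simp add: reduced_Cons)
      thus ?thesis using \<open>zs = m # ms\<close> Cons True m by simp
    qed
  next
    case False
    have "cancels (flip l) l" by (cases l) auto
    thus ?thesis using False Cons by simp
  qed
qed

lemma flip_flip[simp]: "flip (flip l) = l" by (cases l) auto

lemma foldr_red_cons_step:
  assumes "reduced w" "reduced zs"
  shows "foldr red_cons (red_cons l w) zs = red_cons l (foldr red_cons w zs)"
proof (cases w)
  case Nil thus ?thesis by simp
next
  case (Cons m ms)
  show ?thesis
  proof (cases "cancels l m")
    case True
    hence l: "l = flip m" using cancels_flip[of l m] by auto
    have "reduced (foldr red_cons ms zs)" using assms(2) by (rule reduced_foldr)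
    thus ?thesis using Cons True l red_cons_flip by simp
  next
    case False thus ?thesis using Cons by simp
  qed
qed

lemma foldr_normalize: "reduced zs \<Longrightarrow> foldr red_cons (normalize xs) zs = foldr red_cons xs zs"
proof (induction xs)
  case Nil thus ?case by (simp add: normalize_def)
next
  case (Cons x xs)
  have "normalize (x # xs) = red_cons x (normalize xs)" by (simp add: normalize_def)
  thus ?case using foldr_red_cons_step[OF reduced_normalize Cons.prems] Cons by simp
qed

lemma normalize_append: "normalize (xs @ ys) = foldr red_cons xs (normalize ys)"
  by (simp add: normalize_def)

definition winv :: "letter list \<Rightarrow> letter list" where "winv xs = rev (map flip xs)"

lemma foldr_winv: "reduced zs \<Longrightarrow> foldr red_cons xs (foldr red_cons (winv xs) zs) = zs"
proof (induction xs arbitrary: zs)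
  case Nil thus ?case by (simp add: winv_def)
next
  case (Cons l xs)
  have "foldr red_cons (winv (l # xs)) zs = foldr red_cons (winv xs) (red_cons (flip l) zs)"
    by (simp add: winv_def)
  moreover have "reduced (red_cons (flip l) zs)" using Cons.prems by (rule reduced_red_cons)
  ultimately show ?case using Cons.IH red_cons_flip[OF Cons.prems, of "flip l"] by simp
qed

lemma winv_winv[simp]: "winv (winv xs) = xs" by (simp add: winv_def rev_map comp_def)

lemma cancels_flip2: "cancels (flip a) (flip b) = cancels b a"
  by (cases a; cases b) auto

lemma reduced_winv: assumes "reduced xs" shows "reduced (winv xs)"
  unfolding reduced_def winv_def
proof (intro allI impI)
  fix i assume i: "Suc i < length (rev (map flip xs))"
  define j where "j = length xs - 2 - i"
  have j: "Suc j < length xs" "length xs - Suc i = Suc j" "length xs - Suc (Suc i) = j" using i by (auto simp: j_def)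
  have "\<not> cancels (xs ! j) (xs ! Suc j)" using assms j(1) by (simp add: reduced_def)
  thus "\<not> cancels (rev (map flip xs) ! i) (rev (map flip xs) ! Suc i)"
    using i j by (simp add: rev_nth cancels_flip2)
qed

lemma group_F2: "group F2"
proof (rule groupI)
  fix x y assume "x \<in> carrier F2" "y \<in> carrier F2"
  thus "x \<otimes>\<^bsub>F2\<^esub> y \<in> carrier F2" by (simp add: F2_def reduced_normalize)
next
  show "\<one>\<^bsub>F2\<^esub> \<in> carrier F2" by (simp add: F2_def)
next
  fix x y z assume "x \<in> carrier F2" "y \<in> carrier F2" "z \<in> carrier F2"
  show "x \<otimes>\<^bsub>F2\<^esub> y \<otimes>\<^bsub>F2\<^esub> z = x \<otimes>\<^bsub>F2\<^esub> (y \<otimes>\<^bsub>F2\<^esub> z)"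
  proof -
    have "normalize (normalize (x @ y) @ z) = foldr red_cons (normalize (x @ y)) (normalize z)"
      by (rule normalize_append)
    also have "\<dots> = foldr red_cons (x @ y) (normalize z)"
      by (rule foldr_normalize[OF reduced_normalize])
    finally have 1: "normalize (normalize (x @ y) @ z) = foldr red_cons (x @ y) (normalize z)" .
    have "normalize (x @ normalize (y @ z)) = foldr red_cons x (normalize (normalize (y @ z)))"
      by (rule normalize_append)
    hence "normalize (x @ normalize (y @ z)) = foldr red_cons x (normalize (y @ z))"
      by (simp only: normalize_reduced[OF reduced_normalize])
    with 1 show ?thesis by (simp add: F2_def normalize_append)
  qed
next
  fix x assume "x \<in> carrier F2"
  thus "\<one>\<^bsub>F2\<^esub> \<otimes>\<^bsub>F2\<^esub> x = x" by (simp add: F2_def normalize_reduced)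
next
  fix x assume "x \<in> carrier F2"
  show "\<exists>y\<in>carrier F2. y \<otimes>\<^bsub>F2\<^esub> x = \<one>\<^bsub>F2\<^esub>"
  proof (intro bexI)
    show "winv x \<otimes>\<^bsub>F2\<^esub> x = \<one>\<^bsub>F2\<^esub>"
      using foldr_winv[of "[]" "winv x"] by (simp add: F2_def normalize_append normalize_def)
    show "winv x \<in> carrier F2" using \<open>x \<in> carrier F2\<close> reduced_winv by (simp add: F2_def)
  qed
qed


context group begin

lemma cancel1[simp]: "g \<in> carrier G \<Longrightarrow> z \<in> carrier G \<Longrightarrow> inv g \<otimes> (g \<otimes> z) = z"
  by (simp add: m_assoc[symmetric])
lemma cancel2[simp]: "g \<in> carrier G \<Longrightarrow> z \<in> carrier G \<Longrightarrow> g \<otimes> (inv g \<otimes> z) = z"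
  by (simp add: m_assoc[symmetric])

definition cm where "cm x y = x \<otimes> y \<otimes> inv x \<otimes> inv y"

lemma cm_closed[simp]: "x \<in> carrier G \<Longrightarrow> y \<in> carrier G \<Longrightarrow> cm x y \<in> carrier G"
  by (simp add: cm_def)

lemma lcs_SS: "lcs G (Suc (Suc m)) = generate G {cm x y | x y. x \<in> lcs G (Suc m) \<and> y \<in> carrier G}"
  by (simp add: cm_def)

lemma lcs_carrier: "lcs G m \<subseteq> carrier G"
proof (induction m)
  case 0 thus ?case by simp
next
  case (Suc m) thus ?case
  proof (cases m)
    case 0 thus ?thesis by simp
  next
    case (Suc k)
    have "{cm x y | x y. x \<in> lcs G (Suc k) \<and> y \<in> carrier G} \<subseteq> carrier G"
      using Suc.IH \<open>m = Suc k\<close> by auto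
    thus ?thesis using \<open>m = Suc k\<close> lcs_SS generate_incl by simp
  qed
qed

lemma lcs_in_carrier: "x \<in> lcs G m \<Longrightarrow> x \<in> carrier G"
  using lcs_carrier by blast

lemma lcs_subgroup: "subgroup (lcs G m) G"
proof (cases m)
  case 0 thus ?thesis by (simp add: subgroup_self)
next
  case (Suc k) thus ?thesis
  proof (cases k)
    case 0 thus ?thesis using Suc by (simp add: subgroup_self)
  next
    case (Suc j)
    have "{cm x y | x y. x \<in> lcs G (Suc j) \<and> y \<in> carrier G} \<subseteq> carrier G"
      using lcs_in_carrier by auto
    thus ?thesis using \<open>m = Suc k\<close> Suc lcs_SS generate_is_subgroup by simp
  qed
qed

lemma conj_cm: "g \<in> carrier G \<Longrightarrow> x \<in> carrier G \<Longrightarrow> y \<in> carrier G \<Longrightarrow>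
   g \<otimes> cm x y \<otimes> inv g = cm (g \<otimes> x \<otimes> inv g) (g \<otimes> y \<otimes> inv g)"
  by (simp add: cm_def m_assoc inv_mult_group)

lemma lcs_conj: "x \<in> lcs G m \<Longrightarrow> g \<in> carrier G \<Longrightarrow> g \<otimes> x \<otimes> inv g \<in> lcs G m"
proof (induction m arbitrary: x g)
  case 0 thus ?case by simp
next
  case (Suc m) show ?case
  proof (cases m)
    case 0 thus ?thesis using Suc.prems by simp
  next
    case (Suc k)
    let ?S = "{cm x y | x y. x \<in> lcs G (Suc k) \<and> y \<in> carrier G}"
    have S: "?S \<subseteq> carrier G" using lcs_in_carrier by auto
    have "x \<in> generate G ?S" using Suc.prems \<open>m = Suc k\<close> lcs_SS by simp
    hence "g \<otimes> x \<otimes> inv g \<in> generate G ?S" using Suc.prems(2)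
    proof (induction x rule: generate.induct)
      case one thus ?case by (simp add: generate.one)
    next
      case (incl h)
      then obtain a b where h: "h = cm a b" "a \<in> lcs G (Suc k)" "b \<in> carrier G" by blast
      have a: "a \<in> carrier G" using h lcs_in_carrier by blast
      have "g \<otimes> a \<otimes> inv g \<in> lcs G (Suc k)" using Suc.IH h \<open>m = Suc k\<close> incl.prems by blast
      moreover have "g \<otimes> b \<otimes> inv g \<in> carrier G" using h incl.prems by simp
      ultimately have "cm (g \<otimes> a \<otimes> inv g) (g \<otimes> b \<otimes> inv g) \<in> ?S" by blast
      thus ?case using conj_cm[OF incl.prems a h(3)] h by (simp add: generate.incl)
    next
      case (inv h)
      then obtain a b where h: "h = cm a b" "a \<in> lcs G (Suc k)" "b \<in> carrier G" by blast
      have a: "a \<in> carrier G" using h lcs_in_carrier by blast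
      have "g \<otimes> a \<otimes> inv g \<in> lcs G (Suc k)" using Suc.IH h \<open>m = Suc k\<close> inv.prems by blast
      moreover have "g \<otimes> b \<otimes> inv g \<in> carrier G" using h inv.prems by simp
      ultimately have "cm (g \<otimes> a \<otimes> inv g) (g \<otimes> b \<otimes> inv g) \<in> ?S" by blast
      hence "inv (g \<otimes> h \<otimes> inv g) \<in> generate G ?S"
        using conj_cm[OF inv.prems a h(3)] h by (simp add: generate.inv)
      moreover have "inv (g \<otimes> h \<otimes> inv g) = g \<otimes> inv h \<otimes> inv g"
        using h a inv.prems by (simp add: inv_mult_group m_assoc)
      ultimately show ?case by simp
    next
      case (eng h1 h2)
      have c: "h1 \<in> carrier G" "h2 \<in> carrier G" using eng.hyps generate_in_carrier[OF S] by auto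
      have "g \<otimes> (h1 \<otimes> h2) \<otimes> inv g = (g \<otimes> h1 \<otimes> inv g) \<otimes> (g \<otimes> h2 \<otimes> inv g)"
        using c eng.prems by (simp add: m_assoc)
      moreover have "g \<otimes> h1 \<otimes> inv g \<in> generate G ?S" "g \<otimes> h2 \<otimes> inv g \<in> generate G ?S"
        using eng.IH eng.prems by auto
      ultimately show ?case using generate.eng by simp
    qed
    thus ?thesis using \<open>m = Suc k\<close> lcs_SS by simp
  qed
qed

definition T where "T a b c = inv a \<otimes> inv (cm (cm a (inv b)) (inv c)) \<otimes> a"

lemma hall_witt: "x \<in> carrier G \<Longrightarrow> y \<in> carrier G \<Longrightarrow> z \<in> carrier G \<Longrightarrow>
  T x y z \<otimes> T y z x \<otimes> T z x y = \<one>"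
  by (simp add: T_def cm_def m_assoc inv_mult_group)

lemma cm_base: assumes "x \<in> lcs G i" "y \<in> carrier G" shows "cm x y \<in> lcs G (Suc i)"
proof (cases i)
  case 0 thus ?thesis using assms by simp
next
  case (Suc k)
  show ?thesis using assms using Suc lcs_SS[of k] by (auto intro: generate.incl)
qed

lemma lcs_inv: "x \<in> lcs G i \<Longrightarrow> inv x \<in> lcs G i"
  by (rule subgroup.m_inv_closed[OF lcs_subgroup])
lemma lcs_mult: "x \<in> lcs G i \<Longrightarrow> y \<in> lcs G i \<Longrightarrow> x \<otimes> y \<in> lcs G i"
  by (rule subgroup.m_closed[OF lcs_subgroup])
lemma lcs_one: "\<one> \<in> lcs G i"
  by (rule subgroup.one_closed[OF lcs_subgroup])

lemma cm_right: "x \<in> lcs G i \<Longrightarrow> y \<in> carrier G \<Longrightarrow> cm x y \<in> lcs G i"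
proof -
  assume x: "x \<in> lcs G i" and y: "y \<in> carrier G"
  have xc: "x \<in> carrier G" using x lcs_in_carrier by blast
  have "cm x y = x \<otimes> (y \<otimes> inv x \<otimes> inv y)" using xc y by (simp add: cm_def m_assoc)
  moreover have "x \<otimes> (y \<otimes> inv x \<otimes> inv y) \<in> lcs G i"
    using lcs_mult[OF x lcs_conj[OF lcs_inv[OF x] y]] .
  ultimately show ?thesis by simp
qed

lemma cm_inv: "x \<in> carrier G \<Longrightarrow> y \<in> carrier G \<Longrightarrow> inv (cm x y) = cm y x"
  by (simp add: cm_def inv_mult_group m_assoc)

lemma gen_comm:
  assumes N: "\<And>a b. a \<in> N \<Longrightarrow> b \<in> N \<Longrightarrow> a \<otimes> b \<in> N" "\<And>a. a \<in> N \<Longrightarrow> inv a \<in> N" "\<one> \<in> N"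
    "\<And>a g. a \<in> N \<Longrightarrow> g \<in> carrier G \<Longrightarrow> g \<otimes> a \<otimes> inv g \<in> N"
  and H: "H \<subseteq> carrier G" and x: "x \<in> carrier G" and hH: "\<And>h. h \<in> H \<Longrightarrow> cm x h \<in> N"
  and y: "y \<in> generate G H"
  shows "cm x y \<in> N"
  using y
proof (induction y rule: generate.induct)
  case one thus ?case using N x by (simp add: cm_def)
next
  case (incl h) thus ?case using hH by blast
next
  case (inv h)
  have h: "h \<in> carrier G" using inv H by blast
  have "cm x (inv h) = inv h \<otimes> inv (cm x h) \<otimes> inv (inv h)"
    using x h by (simp add: cm_def inv_mult_group m_assoc)
  moreover have "inv h \<otimes> inv (cm x h) \<otimes> inv (inv h) \<in> N"
    using N(4)[OF N(2)[OF hH[OF inv]] inv_closed[OF h]] .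
  ultimately show ?case by simp
next
  case (eng h1 h2)
  have c: "h1 \<in> carrier G" "h2 \<in> carrier G" using eng.hyps generate_in_carrier[OF H] by auto
  have "cm x (h1 \<otimes> h2) = cm x h1 \<otimes> (h1 \<otimes> cm x h2 \<otimes> inv h1)"
    using x c by (simp add: cm_def inv_mult_group m_assoc)
  moreover have "cm x h1 \<otimes> (h1 \<otimes> cm x h2 \<otimes> inv h1) \<in> N"
    using N(1)[OF eng.IH(1) N(4)[OF eng.IH(2) c(1)]] .
  ultimately show ?case by simp
qed

lemma lcs_comm: "x \<in> lcs G i \<Longrightarrow> y \<in> lcs G j \<Longrightarrow> cm x y \<in> lcs G (i + j)"
proof (induction j arbitrary: i x y)
  case 0 thus ?case using cm_right by simp
next
  case (Suc j) show ?case
  proof (cases j)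
    case 0 thus ?thesis using Suc.prems cm_base by simp
  next
    case (Suc k)
    let ?S = "{cm x y | x y. x \<in> lcs G (Suc k) \<and> y \<in> carrier G}"
    have S: "?S \<subseteq> carrier G" using lcs_in_carrier by auto
    have y: "y \<in> generate G ?S" using Suc.prems \<open>j = Suc k\<close> lcs_SS by simp
    have x: "x \<in> carrier G" using lcs_in_carrier[OF Suc.prems(1)] .
    define n where "n = i + Suc (Suc k)"
    have e1: "Suc i + Suc k = n" "Suc (i + Suc k) = n" unfolding n_def by simp_all
    have hH: "cm x h \<in> lcs G n" if "h \<in> ?S" for h
    proof -
      obtain u v where h: "h = cm u v" "u \<in> lcs G (Suc k)" "v \<in> carrier G" using \<open>h \<in> ?S\<close> by blast
      have u: "u \<in> carrier G" using lcs_in_carrier[OF h(2)] .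
      have hw: "T u (inv v) (inv x) \<otimes> T (inv v) (inv x) u \<otimes> T (inv x) u (inv v) = \<one>"
        using hall_witt[OF u inv_closed[OF h(3)] inv_closed[OF x]] .
      have "inv (cm x (inv v)) \<in> lcs G (Suc i)"
        using cm_base[OF Suc.prems(1), of "inv v"] h(3) lcs_inv by simp
      hence a1: "cm (inv v) x \<in> lcs G (Suc i)" using cm_inv[OF x, of "inv v"] h(3) by simp
      have "cm (cm (inv v) x) (inv u) \<in> lcs G (Suc i + Suc k)"
        using Suc.IH[OF a1] lcs_inv[OF h(2)] \<open>j = Suc k\<close> by simp
      hence a2: "cm (cm (inv v) x) (inv u) \<in> lcs G n" by (simp only: e1)
      have "T (inv v) (inv x) u = v \<otimes> inv (cm (cm (inv v) x) (inv u)) \<otimes> inv v"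
        unfolding T_def using h(3) x by simp
      moreover have "v \<otimes> inv (cm (cm (inv v) x) (inv u)) \<otimes> inv v \<in> lcs G n"
        using lcs_conj[OF lcs_inv[OF a2] h(3)] .
      ultimately have T2: "T (inv v) (inv x) u \<in> lcs G n" by simp
      have a3: "cm (inv x) (inv u) \<in> lcs G (i + Suc k)"
        using Suc.IH[OF lcs_inv[OF Suc.prems(1)], of "inv u"] lcs_inv[OF h(2)] \<open>j = Suc k\<close> by simp
      have "cm (cm (inv x) (inv u)) v \<in> lcs G (Suc (i + Suc k))" using cm_base[OF a3 h(3)] .
      hence a4: "cm (cm (inv x) (inv u)) v \<in> lcs G n" by (simp only: e1(2))
      have "T (inv x) u (inv v) = x \<otimes> inv (cm (cm (inv x) (inv u)) v) \<otimes> inv x"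
        unfolding T_def using x h(3) by simp
      moreover have "x \<otimes> inv (cm (cm (inv x) (inv u)) v) \<otimes> inv x \<in> lcs G n"
        using lcs_conj[OF lcs_inv[OF a4] x] .
      ultimately have T3: "T (inv x) u (inv v) \<in> lcs G n" by simp
      have Tc: "T u (inv v) (inv x) \<in> carrier G" "T (inv v) (inv x) u \<in> carrier G" "T (inv x) u (inv v) \<in> carrier G"
        unfolding T_def using u x h(3) by simp_all
      have "T u (inv v) (inv x) \<otimes> (T (inv v) (inv x) u \<otimes> T (inv x) u (inv v)) = \<one>"
        using hw Tc by (simp only: m_assoc)
      hence "inv (T (inv v) (inv x) u \<otimes> T (inv x) u (inv v)) = T u (inv v) (inv x)"
        using Tc by (intro inv_equality) auto
      hence "T u (inv v) (inv x) = inv (T (inv v) (inv x) u \<otimes> T (inv x) u (inv v))" by simp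
      hence T1: "T u (inv v) (inv x) \<in> lcs G n" using lcs_mult[OF T2 T3] lcs_inv by simp
      have "cm x (cm u v) = u \<otimes> T u (inv v) (inv x) \<otimes> inv u"
        unfolding T_def using u x h(3) by (simp add: cm_def inv_mult_group m_assoc)
      moreover have "u \<otimes> T u (inv v) (inv x) \<otimes> inv u \<in> lcs G n" using lcs_conj[OF T1 u] .
      ultimately show ?thesis using h(1) by simp
    qed
    have "cm x y \<in> lcs G n"
      by (rule gen_comm[OF lcs_mult lcs_inv lcs_one lcs_conj S x hH y])
    thus ?thesis using \<open>j = Suc k\<close> n_def by (simp only:)
  qed
qed

end

lemma enat_Sup_add:
  fixes A B C :: "enat set"
  assumes a0: "a0 \<in> A" and b0: "b0 \<in> B" and abC: "\<And>a b. a \<in> A \<Longrightarrow> b \<in> B \<Longrightarrow> a + b \<in> C"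
  shows "Sup A + Sup B \<le> Sup C"
proof (cases "Sup C")
  case infinity thus ?thesis by simp
next
  case (enat K)
  have bA: "a \<le> enat K" if "a \<in> A" for a
  proof -
    have "a \<le> a + b0" by (simp add: le_iff_add)
    also have "\<dots> \<le> Sup C" using abC[OF that b0] by (rule Sup_upper)
    finally show ?thesis using enat by simp
  qed
  have bB: "b \<le> enat K" if "b \<in> B" for b
  proof -
    have "b \<le> a0 + b" by (simp add: le_iff_add add.commute)
    also have "\<dots> \<le> Sup C" using abC[OF a0 that] by (rule Sup_upper)
    finally show ?thesis using enat by simp
  qed
  have fA: "finite A" using bA by (rule finite_enat_bounded)
  have fB: "finite B" using bB by (rule finite_enat_bounded)
  have "Sup A \<in> A" using fA a0 by (auto simp: Sup_enat_def intro: Max_in)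
  moreover have "Sup B \<in> B" using fB b0 by (auto simp: Sup_enat_def intro: Max_in)
  ultimately have "Sup A + Sup B \<in> C" by (rule abC)
  thus ?thesis by (rule Sup_upper)
qed

lemma gen_carrier: "gen_a \<in> carrier F2" "gen_b \<in> carrier F2"
  by (simp_all add: F2_def gen_a_def gen_b_def reduced_Cons)

lemma ab_seq_Suc: "ab_seq (Suc n) = (fst (ab_seq n) \<otimes>\<^bsub>F2\<^esub> snd (ab_seq n),
   inv\<^bsub>F2\<^esub> fst (ab_seq n) \<otimes>\<^bsub>F2\<^esub> inv\<^bsub>F2\<^esub> snd (ab_seq n))"
  by (cases "ab_seq n") simp

lemma ab_carrier: "fst (ab_seq n) \<in> carrier F2 \<and> snd (ab_seq n) \<in> carrier F2"
proof -
  interpret group F2 by (rule group_F2)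
  show ?thesis
  proof (induction n)
    case 0 thus ?case using gen_carrier by simp
  next
    case (Suc n) thus ?case by (simp only: ab_seq_Suc fst_conv snd_conv) simp
  qed
qed

lemma seq_a_carrier: "seq_a n \<in> carrier F2"
  using ab_carrier by (simp add: seq_a_def)

lemma seq_a_rec: "seq_a (Suc (Suc n)) = group.cm F2 (seq_a (Suc n)) (inv\<^bsub>F2\<^esub> (seq_a n))"
proof -
  interpret group F2 by (rule group_F2)
  define x where "x = fst (ab_seq n)"
  define y where "y = snd (ab_seq n)"
  have xy: "x \<in> carrier F2" "y \<in> carrier F2" using ab_carrier x_def y_def by auto
  have "seq_a (Suc (Suc n)) = (x \<otimes>\<^bsub>F2\<^esub> y) \<otimes>\<^bsub>F2\<^esub> (inv\<^bsub>F2\<^esub> x \<otimes>\<^bsub>F2\<^esub> inv\<^bsub>F2\<^esub> y)"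
    by (simp del: ab_seq.simps add: seq_a_def ab_seq_Suc x_def y_def)
  moreover have "seq_a (Suc n) = x \<otimes>\<^bsub>F2\<^esub> y" "seq_a n = x"
    by (simp_all del: ab_seq.simps add: seq_a_def ab_seq_Suc x_def y_def)
  ultimately show ?thesis using xy by (simp add: cm_def m_assoc inv_mult_group)
qed

lemma gamma_ge1: "w \<in> carrier F2 \<Longrightarrow> 1 \<le> gamma_deg w"
  unfolding gamma_deg_def one_enat_def
  by (rule Sup_upper) auto

lemma gamma_step: "gamma_deg (seq_a (Suc n)) + gamma_deg (seq_a n) \<le> gamma_deg (seq_a (Suc (Suc n)))"
proof -
  interpret group F2 by (rule group_F2)
  show ?thesis unfolding gamma_deg_def
  proof (rule enat_Sup_add)
    show "enat 1 \<in> {enat m |m. 1 \<le> m \<and> seq_a (Suc n) \<in> lcs F2 m}" using seq_a_carrier by auto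
    show "enat 1 \<in> {enat m |m. 1 \<le> m \<and> seq_a n \<in> lcs F2 m}" using seq_a_carrier by auto
    fix a b assume a: "a \<in> {enat m |m. 1 \<le> m \<and> seq_a (Suc n) \<in> lcs F2 m}"
      and b: "b \<in> {enat m |m. 1 \<le> m \<and> seq_a n \<in> lcs F2 m}"
    then obtain i j where ij: "a = enat i" "1 \<le> i" "seq_a (Suc n) \<in> lcs F2 i"
      "b = enat j" "1 \<le> j" "seq_a n \<in> lcs F2 j" by blast
    have "cm (seq_a (Suc n)) (inv\<^bsub>F2\<^esub> (seq_a n)) \<in> lcs F2 (i + j)"
      using lcs_comm[OF ij(3) lcs_inv[OF ij(6)]] .
    hence "seq_a (Suc (Suc n)) \<in> lcs F2 (i + j)" by (simp only: seq_a_rec)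
    thus "a + b \<in> {enat m |m. 1 \<le> m \<and> seq_a (Suc (Suc n)) \<in> lcs F2 m}"
      using ij by auto
  qed
qed

lemma phi_sq: "((1 + sqrt 5) / 2) ^ 2 = (1 + sqrt 5) / 2 + (1::real)"
  by (simp add: power2_eq_square algebra_simps)

theorem lemma2p5:
  shows "(\<forall>n. gamma_deg (seq_a (n + 2)) \<ge> gamma_deg (seq_a (n + 1)) + gamma_deg (seq_a n))
    \<and> (\<exists>C::real. C > 0 \<and> (\<forall>n. ereal_of_enat (gamma_deg (seq_a n)) \<ge> ereal (C * ((1 + sqrt 5) / 2) ^ n)))"
proof
  show "\<forall>n. gamma_deg (seq_a (n + 2)) \<ge> gamma_deg (seq_a (n + 1)) + gamma_deg (seq_a n)"
    using gamma_step by (simp add: numeral_2_eq_2)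
next
  define p :: real where "p = (1 + sqrt 5) / 2"
  have p1: "p > 1" unfolding p_def
  proof -
    have "sqrt 5 > 1" by simp
    thus "(1 + sqrt 5) / 2 > 1" by simp
  qed
  have psq: "p ^ 2 = p + 1" unfolding p_def by (rule phi_sq)
  define f where "f n = ereal_of_enat (gamma_deg (seq_a n))" for n
  have f1: "f n \<ge> 1" for n
  proof -
    have "1 \<le> gamma_deg (seq_a n)" by (rule gamma_ge1[OF seq_a_carrier])
    hence "ereal_of_enat 1 \<le> f n" unfolding f_def by (simp only: ereal_of_enat_le_iff)
    thus ?thesis by (simp add: one_enat_def one_ereal_def)
  qed
  have fs: "f (Suc (Suc n)) \<ge> f (Suc n) + f n" for n
    unfolding f_def ereal_of_enat_add[symmetric] ereal_of_enat_le_iff by (rule gamma_step)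
  have main: "f n \<ge> ereal (p ^ n / p) \<and> f (Suc n) \<ge> ereal (p ^ Suc n / p)" for n
  proof (induction n)
    case 0
    have "p ^ 0 / p \<le> 1" using p1 by simp
    hence "ereal (p ^ 0 / p) \<le> 1" by simp
    moreover have "ereal (p ^ Suc 0 / p) = 1" using p1 by simp
    ultimately show ?case using f1[of 0] f1[of "Suc 0"] by (metis order_trans)
  next
    case (Suc n)
    have "ereal (p ^ Suc (Suc n) / p) = ereal (p ^ Suc n / p) + ereal (p ^ n / p)"
    proof -
      have "p ^ Suc (Suc n) = p ^ n * p ^ 2" by (simp add: power_add[symmetric])
      also have "\<dots> = p ^ Suc n + p ^ n" using psq by (simp add: algebra_simps)
      finally show ?thesis by (simp add: add_divide_distrib)
    qed
    also have "\<dots> \<le> f (Suc n) + f n" using Suc.IH by (intro add_mono) auto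
    also have "\<dots> \<le> f (Suc (Suc n))" by (rule fs)
    finally show ?case using Suc.IH by simp
  qed
  show "\<exists>C::real. C > 0 \<and> (\<forall>n. ereal_of_enat (gamma_deg (seq_a n)) \<ge> ereal (C * ((1 + sqrt 5) / 2) ^ n))"
  proof (intro exI conjI allI)
    show "1 / p > 0" using p1 by simp
    fix n
    have "ereal (1 / p * p ^ n) = ereal (p ^ n / p)" by simp
    also have "\<dots> \<le> f n" using main by blast
    finally show "ereal_of_enat (gamma_deg (seq_a n)) \<ge> ereal (1 / p * ((1 + sqrt 5) / 2) ^ n)"
      unfolding f_def p_def .
  qed
qed

end
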